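(* Let $\{x_n\}$ be a statistically convergent sequence in an $S$-metric space $(X,S)$. Then there is a convergent sequence $\{y_n\}$ in $X$ such that $x_n=y_n$ for almost all $n\in\mathbb N$, i.e. $\delta(\{n\in\mathbb N: x_n\ne y_n\})=0$.
   Context: An $S$-metric on a nonempty set $X$ is a function $S:X^3\to[0,\infty)$ such that for all $x,y,z,a\in X$: $S(x,y,z)=0$ if and only if $x=y=z$, and $S(x,y,z)\le S(x,x,a)+S(y,y,a)+S(z,z,a)$. A sequence $\{y_n\}$ converges to $y$ if for every $\varepsilon>0$ there is $k$ with $S(y_n,y_n,y)<\varepsilon$ for all $n\ge k$. For $B\subset\mathbb N$ the natural density is $\delta(B)=\lim_{n\to\infty}\frac{|\{k\in B:k\le n\}|}{n}$ when the limit exists. A sequence $\{x_n\}$ is statistically convergent to $x\in X$ if for every $\varepsilon>0$, $\delta(\{n\in\mathbb N: S(x_n,x_n,x)\ge\varepsilon\})=0$. *)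

theory Defs
  imports "HOL-Analysis.Analysis"
begin

definition S_metric :: "('a \<Rightarrow> 'a \<Rightarrow> 'a \<Rightarrow> real) \<Rightarrow> bool" where
  "S_metric S \<longleftrightarrow>
     (\<forall>x y z. S x y z \<ge> 0) \<and>
     (\<forall>x y z. S x y z = 0 \<longleftrightarrow> x = y \<and> y = z) \<and>
     (\<forall>x y z a. S x y z \<le> S x x a + S y y a + S z z a)"

definition S_converges :: "('a \<Rightarrow> 'a \<Rightarrow> 'a \<Rightarrow> real) \<Rightarrow> (nat \<Rightarrow> 'a) \<Rightarrow> 'a \<Rightarrow> bool" where
  "S_converges S y l \<longleftrightarrow> (\<forall>\<epsilon>>0. \<exists>k. \<forall>n\<ge>k. S (y n) (y n) l < \<epsilon>)"

text \<open>Natural density: the positive integers are modelled as the naturals \<open>\<ge> 1\<close>;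
  \<open>has_natural_density B d\<close> means the limit exists and equals d.\<close>
definition has_natural_density :: "nat set \<Rightarrow> real \<Rightarrow> bool" where
  "has_natural_density B d \<longleftrightarrow>
     (\<lambda>n. real (card {k \<in> B. 1 \<le> k \<and> k \<le> n}) / real n) \<longlonglongrightarrow> d"

definition stat_converges :: "('a \<Rightarrow> 'a \<Rightarrow> 'a \<Rightarrow> real) \<Rightarrow> (nat \<Rightarrow> 'a) \<Rightarrow> 'a \<Rightarrow> bool" where
  "stat_converges S x l \<longleftrightarrow>
     (\<forall>\<epsilon>>0. has_natural_density {n. 1 \<le> n \<and> S (x n) (x n) l \<ge> \<epsilon>} 0)"

end

theory Submission
  imports Defs
begin

theorem theorem3p4:
  fixes S :: "'a \<Rightarrow> 'a \<Rightarrow> 'a \<Rightarrow> real" and x :: "nat \<Rightarrow> 'a" and l :: 'a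
  assumes "S_metric S"
    and "stat_converges S x l"
  shows "\<exists>y :: nat \<Rightarrow> 'a. (\<exists>m. S_converges S y m) \<and>
           has_natural_density {n. 1 \<le> n \<and> x n \<noteq> y n} 0"
proof -
  have S0: "S l l l = 0" using assms(1) unfolding S_metric_def by blast
  define A where "A j = {n. 1 \<le> n \<and> S (x n) (x n) l \<ge> 1 / (real j + 1)}" for j :: nat
  have ex: "\<forall>j. \<exists>N. \<forall>n\<ge>N. real (card {k \<in> A j. 1 \<le> k \<and> k \<le> n}) / real n < 1 / (real j + 1)"
  proof
    fix j
    have "has_natural_density (A j) 0"
    proof -
      have "(0::real) < 1 / (real j + 1)" by simp
      then show ?thesis using assms(2) unfolding stat_converges_def A_def by blast
    qed
    hence "(\<lambda>n. real (card {k \<in> A j. 1 \<le> k \<and> k \<le> n}) / real n) \<longlonglongrightarrow> 0"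
      unfolding has_natural_density_def .
    moreover have "(0::real) < 1 / (real j + 1)" by simp
    ultimately have "\<exists>N. \<forall>n\<ge>N. norm (real (card {k \<in> A j. 1 \<le> k \<and> k \<le> n}) / real n - 0) < 1 / (real j + 1)"
      by (rule LIMSEQ_D)
    thus "\<exists>N. \<forall>n\<ge>N. real (card {k \<in> A j. 1 \<le> k \<and> k \<le> n}) / real n < 1 / (real j + 1)" by auto
  qed
  from choice[OF ex] obtain N where N0: "\<forall>j. \<forall>n\<ge>N j. real (card {k \<in> A j. 1 \<le> k \<and> k \<le> n}) / real n < 1 / (real j + 1)"
    by blast
  have N: "\<And>j n. n \<ge> N j \<Longrightarrow> real (card {k \<in> A j. 1 \<le> k \<and> k \<le> n}) / real n < 1 / (real j + 1)"
    using N0 by blast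
  define M where "M j = max j (Max (N ` {..j}))" for j
  have Mmono: "M i \<le> M j" if "i \<le> j" for i j
  proof -
    have h: "Max (N ` {..i}) \<le> Max (N ` {..j})"
      by (rule Max_mono) (use that in auto)
    show ?thesis unfolding M_def by (rule max.mono[OF that h])
  qed
  have Mge: "j \<le> M j" "N j \<le> M j" for j
  proof -
    show "j \<le> M j" unfolding M_def by simp
    have "N j \<le> Max (N ` {..j})" by (rule Max_ge) auto
    thus "N j \<le> M j" unfolding M_def by (rule le_max_iff_disj[THEN iffD2, OF disjI2])
  qed
  have Amono: "A i \<subseteq> A j" if "i \<le> j" for i j
  proof
    fix n assume "n \<in> A i"
    moreover have "1 / (real j + 1) \<le> 1 / (real i + 1)"
      using that by (simp add: frac_le)
    ultimately show "n \<in> A j" unfolding A_def by auto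
  qed
  define y where "y n = (if \<exists>j. M j \<le> n \<and> S (x n) (x n) l \<ge> 1 / (real j + 1) then l else x n)" for n
  have conv: "S_converges S y l"
    unfolding S_converges_def
  proof (intro allI impI)
    fix e :: real assume e: "e > 0"
    obtain j0 :: nat where j0: "1 / (real j0 + 1) < e"
    proof -
      obtain j0 :: nat where "inverse (of_nat (Suc j0)) < e" using reals_Archimedean[OF e] by blast
      hence "1 / (real j0 + 1) < e" by (simp add: inverse_eq_divide add.commute)
      thus ?thesis using that by blast
    qed
    show "\<exists>k. \<forall>n\<ge>k. S (y n) (y n) l < e"
    proof (intro exI allI impI)
      fix n assume n: "M j0 \<le> n"
      show "S (y n) (y n) l < e"
      proof (cases "\<exists>j. M j \<le> n \<and> S (x n) (x n) l \<ge> 1 / (real j + 1)")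
        case True thus ?thesis using S0 e unfolding y_def by simp
      next
        case False
        hence "S (x n) (x n) l < 1 / (real j0 + 1)" using n spec[OF False[unfolded not_ex not_le de_Morgan_conj], of j0] by linarith
        moreover have "y n = x n" using False unfolding y_def by (simp only: if_False)
        ultimately show ?thesis using j0 by simp
      qed
    qed
  qed
  define D where "D = {n. 1 \<le> n \<and> x n \<noteq> y n}"
  define J where "J n = Max {j. M j \<le> n}" for n
  have Jfin: "finite {j. M j \<le> n}" for n
    by (rule finite_subset[of _ "{..n}"]) (use Mge(1) order_trans in auto)
  have dens: "(\<lambda>n. real (card {k \<in> D. 1 \<le> k \<and> k \<le> n}) / real n) \<longlonglongrightarrow> 0"
  proof (rule LIMSEQ_I)
    fix e :: real assume e: "e > 0"
    obtain j0 :: nat where j0: "1 / (real j0 + 1) < e"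
    proof -
      obtain j0 :: nat where "inverse (of_nat (Suc j0)) < e" using reals_Archimedean[OF e] by blast
      hence "1 / (real j0 + 1) < e" by (simp add: inverse_eq_divide add.commute)
      thus ?thesis using that by blast
    qed
    show "\<exists>no. \<forall>n\<ge>no. norm (real (card {k \<in> D. 1 \<le> k \<and> k \<le> n}) / real n - 0) < e"
    proof (intro exI allI impI)
      fix n assume n: "M j0 \<le> n"
      have inJ: "M (J n) \<le> n" unfolding J_def using Max_in[OF Jfin[of n]] n by auto
      have jJ: "j0 \<le> J n" unfolding J_def using Max_ge[OF Jfin[of n]] n by auto
      have sub: "{k \<in> D. 1 \<le> k \<and> k \<le> n} \<subseteq> {k \<in> A (J n). 1 \<le> k \<and> k \<le> n}"
      proof
        fix k assume k: "k \<in> {k \<in> D. 1 \<le> k \<and> k \<le> n}"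
        hence "x k \<noteq> y k" unfolding D_def by auto
        then obtain j where j: "M j \<le> k" "S (x k) (x k) l \<ge> 1 / (real j + 1)"
          unfolding y_def by (auto split: if_splits)
        have "j \<le> J n" unfolding J_def
          by (rule Max_ge[OF Jfin]) (use j k in auto)
        moreover have "k \<in> A j" unfolding A_def using j k by auto
        ultimately show "k \<in> {k \<in> A (J n). 1 \<le> k \<and> k \<le> n}" using Amono k by blast
      qed
      have "card {k \<in> D. 1 \<le> k \<and> k \<le> n} \<le> card {k \<in> A (J n). 1 \<le> k \<and> k \<le> n}"
        by (rule card_mono[OF _ sub]) (rule finite_subset[of _ "{..n}"], auto)
      hence "real (card {k \<in> D. 1 \<le> k \<and> k \<le> n}) / real n
              \<le> real (card {k \<in> A (J n). 1 \<le> k \<and> k \<le> n}) / real n"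
        by (simp add: divide_right_mono)
      also have "\<dots> < 1 / (real (J n) + 1)"
        by (rule N) (use inJ Mge(2)[of "J n"] in linarith)
      also have "\<dots> \<le> 1 / (real j0 + 1)" using jJ by (simp add: frac_le)
      finally show "norm (real (card {k \<in> D. 1 \<le> k \<and> k \<le> n}) / real n - 0) < e"
        using j0 by simp
    qed
  qed
  show ?thesis
    using conv dens unfolding has_natural_density_def D_def by blast
qed

end
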